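(* Let $P$ be a span program and $x$ an input, and let $S,T$ be positive-definite diagonal $|J|\times|J|$ matrices. Then $$\mathrm{wsize}_{S\sqrt{1+T}}(P,x)\le\mathrm{wsize}_S(P,x)\,(1+\|T\|),\qquad \mathrm{wsize}_{\sqrt{S^2+T^2}}(P,x)\le\mathrm{wsize}_S(P,x)+O(\|T\|^2),$$ where the constant in $O(\cdot)$ depends only on $P$. In particular, fix input complexities $U_i$ with grouped input complexities $\tilde U_j$. Let $\tilde U'_j>0$ ($j\in J$) satisfy $\tilde U'_j\lesssim\tilde U_j$ for all $j$, and let $\tilde U'=\sum_j\tilde U'_j|j\rangle\langle j|$. Then $$\mathrm{wsize}_{\sqrt{\tilde U'}}(P,x)\lesssim\mathrm{wsize}_{\sqrt{\tilde U}}(P,x)=\mathrm{wsize}(P,x).$$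
   Context: A span program $P$ has target $t=(1,0,\dots,0)\in\mathbb{C}^m$ and vectors $v_j$ ($j\in J$) labeled by literal sets $X_j$. Grouped input $j$ is true on $x$ iff all literals in $X_j$ are true. We set $f_P(x)=1$ iff $t$ is in the span of the true $v_j$. Let $\Pi=\sum_{j\text{ true}}|j\rangle\langle j|$ and $A=\sum_j|v_j\rangle\langle j|$. For positive-definite diagonal $S$: - if $f_P(x)=1$, $\mathrm{wsize}_S(P,x)=\min\{\|Sw\|^2:A\Pi w=t\}$; - if $f_P(x)=0$, $\mathrm{wsize}_S(P,x)=\min\{\|SA^\dagger w'\|^2:\langle t|w'\rangle=1,\ \Pi A^\dagger w'=0\}$. Input complexities are positive reals $U_i$, one for each literal occurrence $i\in I_j$ of $X_j$. Grouped input complexities are - $\tilde U_j=\max\{\sum_{i\in I_j}U_i,1\}$ if $j$ is true; - $\tilde U_j=(\sum_{i\in I_j\text{ false}}U_i^{-1})^{-1}$ otherwise. Set $\tilde U=\sum_j\tilde U_j|j\rangle\langle j|$ and $\mathrm{wsize}(P,x)=\mathrm{wsize}_{\sqrt{\tilde U}}(P,x)$. Notation $a\lesssim b$, relative to a real parameter $\lambda$ and the complexities $U_i$: there exist constants $c_1,c_2$ such that $a\le c_1+b(1+c_2|\lambda|\max_iU_i)$. In the conclusion, the constants may depend on those in the hypothesis and on $P$. *)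

theory Defs
  imports "HOL-Analysis.Analysis"
begin

text \<open>A span program over input variables of type 'i, with grouped inputs indexed by
  the finite type 'j.  Vectors live in C^m, represented as functions nat => complex of which
  only the coordinates k < m matter.  Each grouped input j carries a list of literals;
  a literal (k, b) stands for x_k if b = True and for the negation of x_k if b = False.
  Literal occurrences of X_j are indexed by positions i < length (sp_lits P j).\<close>
record ('i, 'j) span_program =
  sp_dim  :: nat
  sp_vec  :: "'j \<Rightarrow> nat \<Rightarrow> complex"
  sp_lits :: "'j \<Rightarrow> ('i \<times> bool) list"

definition sp_wf :: "('i, 'j) span_program \<Rightarrow> bool" where
  "sp_wf P \<longleftrightarrow> 0 < sp_dim P"

definition lit_true :: "('i \<Rightarrow> bool) \<Rightarrow> 'i \<times> bool \<Rightarrow> bool" where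
  "lit_true x l \<longleftrightarrow> x (fst l) = snd l"

definition grp_true :: "('i, 'j) span_program \<Rightarrow> ('i \<Rightarrow> bool) \<Rightarrow> 'j \<Rightarrow> bool" where
  "grp_true P x j \<longleftrightarrow> (\<forall>l \<in> set (sp_lits P j). lit_true x l)"

definition tvec :: "nat \<Rightarrow> complex" where
  "tvec k = (if k = 0 then 1 else 0)"

definition pos_witness :: "('i, 'j::finite) span_program \<Rightarrow> ('i \<Rightarrow> bool) \<Rightarrow> ('j \<Rightarrow> complex) \<Rightarrow> bool" where
  "pos_witness P x w \<longleftrightarrow>
     (\<forall>k < sp_dim P. (\<Sum>j\<in>UNIV. (if grp_true P x j then w j else 0) * sp_vec P j k) = tvec k)"

definition fP :: "('i, 'j::finite) span_program \<Rightarrow> ('i \<Rightarrow> bool) \<Rightarrow> bool" where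
  "fP P x \<longleftrightarrow> (\<exists>c. \<forall>k < sp_dim P.
       (\<Sum>j\<in>{j. grp_true P x j}. c j * sp_vec P j k) = tvec k)"

definition Adag :: "('i, 'j) span_program \<Rightarrow> (nat \<Rightarrow> complex) \<Rightarrow> 'j \<Rightarrow> complex" where
  "Adag P w' j = (\<Sum>k<sp_dim P. cnj (sp_vec P j k) * w' k)"

definition wsize :: "('i, 'j::finite) span_program \<Rightarrow> ('j \<Rightarrow> real) \<Rightarrow> ('i \<Rightarrow> bool) \<Rightarrow> real" where
  "wsize P S x =
    (if fP P x then
       Inf {(\<Sum>j\<in>UNIV. (S j * cmod (w j))\<^sup>2) | w. pos_witness P x w}
     else
       Inf {(\<Sum>j\<in>UNIV. (S j * cmod (Adag P w' j))\<^sup>2) | w'.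
              (\<Sum>k<sp_dim P. cnj (tvec k) * w' k) = 1 \<and>
              (\<forall>j. grp_true P x j \<longrightarrow> Adag P w' j = 0)})"

definition dnorm :: "('j::finite \<Rightarrow> real) \<Rightarrow> real" where
  "dnorm T = Max (range (\<lambda>j. \<bar>T j\<bar>))"

definition posdiag :: "('j \<Rightarrow> real) \<Rightarrow> bool" where
  "posdiag S \<longleftrightarrow> (\<forall>j. 0 < S j)"

text \<open>Grouped input complexities; U j i is the complexity of the i-th literal occurrence of X_j.\<close>
definition Utilde :: "('i, 'j) span_program \<Rightarrow> ('j \<Rightarrow> nat \<Rightarrow> real) \<Rightarrow> ('i \<Rightarrow> bool) \<Rightarrow> 'j \<Rightarrow> real" where
  "Utilde P U x j =
    (if grp_true P x j then max (\<Sum>i<length (sp_lits P j). U j i) 1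
     else inverse (\<Sum>i\<in>{i. i < length (sp_lits P j) \<and> \<not> lit_true x (sp_lits P j ! i)}.
                     inverse (U j i)))"

text \<open>max_i U_i over all literal occurrences (0 if there are none; the U_i are positive)\<close>
definition maxU :: "('i, 'j) span_program \<Rightarrow> ('j \<Rightarrow> nat \<Rightarrow> real) \<Rightarrow> real" where
  "maxU P U = Max (insert 0 {U j i | j i. i < length (sp_lits P j)})"

definition compl_pos :: "('i, 'j) span_program \<Rightarrow> ('j \<Rightarrow> nat \<Rightarrow> real) \<Rightarrow> bool" where
  "compl_pos P U \<longleftrightarrow> (\<forall>j i. i < length (sp_lits P j) \<longrightarrow> 0 < U j i)"

definition wsize_U :: "('i, 'j::finite) span_program \<Rightarrow> ('j \<Rightarrow> nat \<Rightarrow> real) \<Rightarrow> ('i \<Rightarrow> bool) \<Rightarrow> real" where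
  "wsize_U P U x = wsize P (\<lambda>j. sqrt (Utilde P U x j)) x"

end

theory Submission
  imports Defs
begin


definition cdom :: "('a \<Rightarrow> real) \<Rightarrow> ('a \<Rightarrow> real) \<Rightarrow> bool" where
  "cdom p y \<longleftrightarrow> (\<forall>i. (0 \<le> y i \<longrightarrow> 0 \<le> p i \<and> p i \<le> y i) \<and> (y i \<le> 0 \<longrightarrow> y i \<le> p i \<and> p i \<le> 0))"

definition conf :: "('a \<Rightarrow> real) \<Rightarrow> ('a \<Rightarrow> real) \<Rightarrow> bool" where
  "conf p y \<longleftrightarrow> (\<forall>i. (0 \<le> y i \<longrightarrow> 0 \<le> p i) \<and> (y i \<le> 0 \<longrightarrow> p i \<le> 0))"

lemma cdom_trans: "cdom a b \<Longrightarrow> cdom b c \<Longrightarrow> cdom a c"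
  unfolding cdom_def by (meson order_trans)

lemma push_pt:
  fixes a b T :: real
  assumes "0 < T" "a = 0 \<Longrightarrow> b = 0" "a * b < 0 \<Longrightarrow> T \<le> - a / b"
  shows "(0 \<le> a \<longrightarrow> 0 \<le> a + T * b) \<and> (a \<le> 0 \<longrightarrow> a + T * b \<le> 0)
     \<and> (a * b \<le> 0 \<longrightarrow> (0 \<le> a \<longrightarrow> a + T * b \<le> a) \<and> (a \<le> 0 \<longrightarrow> a \<le> a + T * b))
     \<and> (a = 0 \<longrightarrow> a + T * b = 0)"
proof (cases "a * b < 0")
  case True
  then have T: "T \<le> - a / b" using assms by blast
  show ?thesis
  proof (cases "b < 0")
    case True
    have "T * b \<ge> (- a / b) * b" using T True by (intro mult_right_mono_neg) auto
    moreover have "(- a / b) * b = - a" using True by simp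
    ultimately have "T * b \<ge> - a" by simp
    moreover have "T * b \<le> 0" using True \<open>0 < T\<close> by (simp add: mult_pos_neg less_imp_le)
    ultimately show ?thesis using \<open>a*b<0\<close> True by (smt (verit) mult_nonpos_nonpos)
  next
    case False
    then have "b > 0" using \<open>a*b<0\<close> by (cases "b = 0") auto
    have "T * b \<le> (- a / b) * b" using T \<open>b>0\<close> by (intro mult_right_mono) auto
    moreover have "(- a / b) * b = - a" using \<open>b>0\<close> by simp
    ultimately have "T * b \<le> - a" by simp
    moreover have "T * b \<ge> 0" using \<open>b>0\<close> \<open>0 < T\<close> by simp
    ultimately show ?thesis using \<open>a*b<0\<close> \<open>b>0\<close> by (smt (verit) mult_nonneg_nonneg)
  qed
next
  case False
  show ?thesis
  proof (cases "a = 0")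
    case True then show ?thesis using assms by simp
  next
    case an: False
    have "0 \<le> a * b" using False by simp
    then have "(0 < a \<longrightarrow> 0 \<le> b) \<and> (a < 0 \<longrightarrow> b \<le> 0)"
      by (smt (verit) mult_pos_neg mult_neg_pos)
    then show ?thesis using an \<open>0 < T\<close>
      by (smt (verit) mult_nonneg_nonneg mult_pos_neg mult_neg_pos mult_nonneg_nonpos zero_less_mult_iff)
  qed
qed

lemma push_vec:
  fixes y z :: "'a::finite \<Rightarrow> real"
  assumes T: "0 < T" and z0: "\<And>i. y i = 0 \<Longrightarrow> z i = 0"
    and Tle: "\<And>i. y i * z i < 0 \<Longrightarrow> T \<le> - y i / z i"
  shows "conf (\<lambda>i. y i + T * z i) y"
    and "(\<forall>i. y i * z i \<le> 0) \<Longrightarrow> cdom (\<lambda>i. y i + T * z i) y"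
    and "{i. y i + T * z i \<noteq> 0} \<subseteq> {i. y i \<noteq> 0}"
proof -
  have pt: "\<And>i. (0 \<le> y i \<longrightarrow> 0 \<le> y i + T * z i) \<and> (y i \<le> 0 \<longrightarrow> y i + T * z i \<le> 0)
     \<and> (y i * z i \<le> 0 \<longrightarrow> (0 \<le> y i \<longrightarrow> y i + T * z i \<le> y i) \<and> (y i \<le> 0 \<longrightarrow> y i \<le> y i + T * z i))
     \<and> (y i = 0 \<longrightarrow> y i + T * z i = 0)"
    by (rule push_pt[OF T z0 Tle])
  show "conf (\<lambda>i. y i + T * z i) y" unfolding conf_def using pt by blast
  show "(\<forall>i. y i * z i \<le> 0) \<Longrightarrow> cdom (\<lambda>i. y i + T * z i) y" unfolding cdom_def using pt by blast
  show "{i. y i + T * z i \<noteq> 0} \<subseteq> {i. y i \<noteq> 0}" using pt by blast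
qed

lemma step_lemma:
  fixes Y :: "('a::finite \<Rightarrow> real) set" and y z :: "'a \<Rightarrow> real"
  assumes aff: "\<And>y y' t. y \<in> Y \<Longrightarrow> y' \<in> Y \<Longrightarrow> (\<lambda>i. y i + t * (y' i - y i)) \<in> Y"
    and yY: "y \<in> Y" and line: "\<And>t. (\<lambda>i. y i + t * z i) \<in> Y"
    and z0: "\<And>i. y i = 0 \<Longrightarrow> z i = 0" and neg: "\<exists>i. y i * z i < 0"
    and IH: "\<And>p. p \<in> Y \<Longrightarrow> card {i. p i \<noteq> 0} < card {i. y i \<noteq> 0} \<Longrightarrow>
               \<exists>p'\<in>Y. cdom p' p \<and> (\<forall>i. \<bar>p' i\<bar> \<le> C)"
  shows "\<exists>y'\<in>Y. cdom y' y \<and> (\<forall>i. \<bar>y' i\<bar> \<le> C)"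
proof -
  define N where "N = {i. y i * z i < 0}"
  have Nne: "N \<noteq> {}" using neg N_def by auto
  have finN: "finite N" by simp
  define Tp where "Tp = Min ((\<lambda>i. - y i / z i) ` N)"
  have Tpos: "0 < Tp" unfolding Tp_def using Nne finN
    by (auto simp: N_def Min_gr_iff zero_less_divide_iff mult_less_0_iff divide_less_0_iff)
  have "Tp \<in> (\<lambda>i. - y i / z i) ` N" unfolding Tp_def using Nne finN by (intro Min_in) auto
  then obtain i1 where i1: "i1 \<in> N" "Tp = - y i1 / z i1" by blast
  have Tple: "\<And>i. y i * z i < 0 \<Longrightarrow> Tp \<le> - y i / z i"
    unfolding Tp_def using finN by (auto simp: N_def intro!: Min_le)
  define p where "p = (\<lambda>i. y i + Tp * z i)"
  have pY: "p \<in> Y" unfolding p_def by (rule line)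
  have pconf: "conf p y" unfolding p_def by (rule push_vec(1)[OF Tpos z0 Tple])
  have psub: "{i. p i \<noteq> 0} \<subseteq> {i. y i \<noteq> 0}" unfolding p_def by (rule push_vec(3)[OF Tpos z0 Tple])
  have zi1: "z i1 \<noteq> 0" "y i1 \<noteq> 0" using i1(1) N_def by auto
  have "p i1 = 0" unfolding p_def i1(2) using zi1 by simp
  then have "card {i. p i \<noteq> 0} < card {i. y i \<noteq> 0}"
    using psub zi1 by (intro psubset_card_mono) auto
  then obtain p' where p': "p' \<in> Y" "cdom p' p" "\<forall>i. \<bar>p' i\<bar> \<le> C" using IH pY by blast
  show ?thesis
  proof (cases "\<forall>i. y i * z i \<le> 0")
    case True
    have "cdom p y" unfolding p_def
      using push_vec(2)[of Tp y z, OF Tpos z0 Tple] True by blast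
    then show ?thesis using p' cdom_trans by blast
  next
    case False
    define M where "M = {i. 0 < y i * z i}"
    have Mne: "M \<noteq> {}" using False M_def by (auto simp: not_le)
    have finM: "finite M" by simp
    define Tm where "Tm = Min ((\<lambda>i. y i / z i) ` M)"
    have Tmpos: "0 < Tm" unfolding Tm_def using Mne finM
      by (auto simp: M_def Min_gr_iff zero_less_mult_iff zero_less_divide_iff)
    have "Tm \<in> (\<lambda>i. y i / z i) ` M" unfolding Tm_def using Mne finM by (intro Min_in) auto
    then obtain i2 where i2: "i2 \<in> M" "Tm = y i2 / z i2" by blast
    have Tmle: "\<And>i. y i * (- z i) < 0 \<Longrightarrow> Tm \<le> - y i / (- z i)"
      unfolding Tm_def using finM by (auto simp: M_def intro!: Min_le)
    have z0': "\<And>i. y i = 0 \<Longrightarrow> - z i = 0" using z0 by simp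
    define q where "q = (\<lambda>i. y i + Tm * (- z i))"
    have qY: "q \<in> Y" unfolding q_def using line[of "- Tm"] by simp
    have qconf: "conf q y" unfolding q_def by (rule push_vec(1)[OF Tmpos z0' Tmle])
    have qsub: "{i. q i \<noteq> 0} \<subseteq> {i. y i \<noteq> 0}" unfolding q_def by (rule push_vec(3)[OF Tmpos z0' Tmle])
    have zi2: "z i2 \<noteq> 0" "y i2 \<noteq> 0" using i2(1) M_def by auto
    have "q i2 = 0" unfolding q_def i2(2) using zi2 by simp
    then have "card {i. q i \<noteq> 0} < card {i. y i \<noteq> 0}"
      using qsub zi2 by (intro psubset_card_mono) auto
    then obtain q' where q': "q' \<in> Y" "cdom q' q" "\<forall>i. \<bar>q' i\<bar> \<le> C" using IH qY by blast
    define l where "l = Tm / (Tp + Tm)"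
    have l01: "0 \<le> l" "l \<le> 1" using Tpos Tmpos unfolding l_def by auto
    have ycomb: "\<And>i. l * p i + (1 - l) * q i = y i"
    proof -
      fix i
      have e1: "1 - l = Tp / (Tp + Tm)" unfolding l_def using Tpos Tmpos by (simp add: field_simps)
      have e2: "Tm * p i + Tp * q i = (Tp + Tm) * y i" by (simp add: p_def q_def algebra_simps)
      have "l * p i + (1 - l) * q i = (Tm * p i + Tp * q i) / (Tp + Tm)"
        by (subst e1) (simp only: l_def add_divide_distrib times_divide_eq_left)
      also have "\<dots> = y i" unfolding e2 using Tpos Tmpos by simp
      finally show "l * p i + (1 - l) * q i = y i" .
    qed
    define y' where "y' = (\<lambda>i. l * p' i + (1 - l) * q' i)"
    have "y' = (\<lambda>i. p' i + (1 - l) * (q' i - p' i))" unfolding y'_def by (auto simp: algebra_simps)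
    then have y'Y: "y' \<in> Y" using aff[OF p'(1) q'(1)] by simp
    have "cdom y' y" unfolding cdom_def
    proof (intro allI conjI impI)
      fix i
      have A: "0 \<le> y i \<Longrightarrow> 0 \<le> p' i \<and> p' i \<le> p i" "0 \<le> y i \<Longrightarrow> 0 \<le> q' i \<and> q' i \<le> q i"
        "y i \<le> 0 \<Longrightarrow> p i \<le> p' i \<and> p' i \<le> 0" "y i \<le> 0 \<Longrightarrow> q i \<le> q' i \<and> q' i \<le> 0"
        using pconf qconf p'(2) q'(2) unfolding conf_def cdom_def by meson+
      have m1: "l * p' i \<le> l * p i" if "p' i \<le> p i" using that l01 by (simp add: mult_left_mono)
      have m2: "(1-l) * q' i \<le> (1-l) * q i" if "q' i \<le> q i" using that l01 by (simp add: mult_left_mono)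
      have m3: "l * p i \<le> l * p' i" if "p i \<le> p' i" using that l01 by (simp add: mult_left_mono)
      have m4: "(1-l) * q i \<le> (1-l) * q' i" if "q i \<le> q' i" using that l01 by (simp add: mult_left_mono)
      have s1: "0 \<le> l * p' i" if "0 \<le> p' i" using that l01 by simp
      have s2: "0 \<le> (1-l) * q' i" if "0 \<le> q' i" using that l01 by simp
      have s3: "l * p' i \<le> 0" if "p' i \<le> 0" using that l01 by (simp add: mult_nonneg_nonpos)
      have s4: "(1-l) * q' i \<le> 0" if "q' i \<le> 0" using that l01 by (simp add: mult_nonneg_nonpos)
      show "0 \<le> y' i" if h: "0 \<le> y i"
      proof -
        have "0 \<le> p' i" "0 \<le> q' i" using A h by auto
        then show ?thesis using s1 s2 unfolding y'_def by linarith
      qed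
      show "y' i \<le> y i" if h: "0 \<le> y i"
      proof -
        have "p' i \<le> p i" "q' i \<le> q i" using A h by auto
        then show ?thesis using m1 m2 ycomb[of i] unfolding y'_def by linarith
      qed
      show "y i \<le> y' i" if h: "y i \<le> 0"
      proof -
        have "p i \<le> p' i" "q i \<le> q' i" using A h by auto
        then show ?thesis using m3 m4 ycomb[of i] unfolding y'_def by linarith
      qed
      show "y' i \<le> 0" if h: "y i \<le> 0"
      proof -
        have "p' i \<le> 0" "q' i \<le> 0" using A h by auto
        then show ?thesis using s3 s4 unfolding y'_def by linarith
      qed
    qed
    moreover have "\<forall>i. \<bar>y' i\<bar> \<le> C"
    proof
      fix i
      have "\<bar>y' i\<bar> \<le> \<bar>l * p' i\<bar> + \<bar>(1 - l) * q' i\<bar>"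
        unfolding y'_def by (rule abs_triangle_ineq)
      also have "\<dots> = l * \<bar>p' i\<bar> + (1 - l) * \<bar>q' i\<bar>"
        using l01 by (simp add: abs_mult)
      also have "\<dots> \<le> l * C + (1 - l) * C"
        using l01 p'(3) q'(3) by (intro add_mono mult_left_mono) auto
      finally show "\<bar>y' i\<bar> \<le> C" by (simp add: algebra_simps)
    qed
    ultimately show ?thesis using y'Y by blast
  qed
qed

lemma conformal_bound:
  fixes Y :: "('a::finite \<Rightarrow> real) set"
  assumes aff: "\<And>y y' t. y \<in> Y \<Longrightarrow> y' \<in> Y \<Longrightarrow> (\<lambda>i. y i + t * (y' i - y i)) \<in> Y"
  shows "\<exists>C. \<forall>y\<in>Y. \<exists>y'\<in>Y. \<forall>i. \<bar>y' i\<bar> \<le> \<bar>y i\<bar> \<and> \<bar>y' i\<bar> \<le> C"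
proof -
  define B where "B = {b\<in>Y. \<forall>b'\<in>Y. (\<forall>i. b i = 0 \<longrightarrow> b' i = 0) \<longrightarrow> b' = b}"
  have inj: "inj_on (\<lambda>b. {i. b i = 0}) B"
  proof (rule inj_onI)
    fix b1 b2 assume b: "b1 \<in> B" "b2 \<in> B" "{i. b1 i = 0} = {i. b2 i = 0}"
    then have "\<forall>i. b1 i = 0 \<longrightarrow> b2 i = 0" by blast
    then show "b1 = b2" using b(1,2) unfolding B_def by blast
  qed
  have finB: "finite B"
    by (rule finite_imageD[OF _ inj]) simp
  define C where "C = Max (insert 0 ((\<lambda>(b, i). \<bar>b i\<bar>) ` (B \<times> UNIV)))"
  have Cb: "\<And>b i. b \<in> B \<Longrightarrow> \<bar>b i\<bar> \<le> C"
    unfolding C_def using finB by (intro Max_ge) auto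
  have key: "\<forall>y\<in>Y. card {i. y i \<noteq> 0} = n \<longrightarrow> (\<exists>y'\<in>Y. cdom y' y \<and> (\<forall>i. \<bar>y' i\<bar> \<le> C))" for n
  proof (induction n rule: less_induct)
    case (less n)
    show ?case
    proof (intro ballI impI)
      fix y assume yY: "y \<in> Y" and cn: "card {i. y i \<noteq> 0} = n"
      show "\<exists>y'\<in>Y. cdom y' y \<and> (\<forall>i. \<bar>y' i\<bar> \<le> C)"
      proof (cases "y \<in> B")
        case True
        have "cdom y y" unfolding cdom_def by auto
        then show ?thesis using True yY Cb by blast
      next
        case False
        then obtain y2 where y2: "y2 \<in> Y" "\<forall>i. y i = 0 \<longrightarrow> y2 i = 0" "y2 \<noteq> y"
          using yY unfolding B_def by blast
        define z0 where "z0 = (\<lambda>i. y2 i - y i)"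
        have z00: "\<And>i. y i = 0 \<Longrightarrow> z0 i = 0" using y2(2) z0_def by simp
        obtain i0 where "z0 i0 \<noteq> 0" using y2(3) unfolding z0_def by (metis eq_iff_diff_eq_0 ext)
        then have yz0: "y i0 * z0 i0 \<noteq> 0" using z00 by auto
        have IH: "\<And>p. p \<in> Y \<Longrightarrow> card {i. p i \<noteq> 0} < card {i. y i \<noteq> 0} \<Longrightarrow>
               \<exists>p'\<in>Y. cdom p' p \<and> (\<forall>i. \<bar>p' i\<bar> \<le> C)"
          using less cn by blast
        have line0: "\<And>t. (\<lambda>i. y i + t * z0 i) \<in> Y" unfolding z0_def using aff[OF yY y2(1)] by blast
        show ?thesis
        proof (cases "y i0 * z0 i0 < 0")
          case True
          show ?thesis by (rule step_lemma[OF aff yY line0 z00 _ IH]) (use True in auto)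
        next
          case False
          then have "0 < y i0 * z0 i0" using yz0 by linarith
          then have neg: "y i0 * (- z0 i0) < 0" by simp
          have line1: "\<And>t. (\<lambda>i. y i + t * (- z0 i)) \<in> Y" 
          proof -
            fix t show "(\<lambda>i. y i + t * (- z0 i)) \<in> Y" using line0[of "- t"] by simp
          qed
          have z01: "\<And>i. y i = 0 \<Longrightarrow> - z0 i = 0" using z00 by simp
          show ?thesis by (rule step_lemma[OF aff yY line1 z01 _ IH]) (use neg in auto)
        qed
      qed
    qed
  qed
  show ?thesis
  proof (intro exI ballI)
    fix y assume "y \<in> Y"
    then obtain y' where "y' \<in> Y" "cdom y' y" "\<forall>i. \<bar>y' i\<bar> \<le> C" using key by blast
    moreover have "\<forall>i. \<bar>y' i\<bar> \<le> \<bar>y i\<bar>" using \<open>cdom y' y\<close> unfolding cdom_def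
      by (smt (verit))
    ultimately show "\<exists>y'\<in>Y. \<forall>i. \<bar>y' i\<bar> \<le> \<bar>y i\<bar> \<and> \<bar>y' i\<bar> \<le> C" by blast
  qed
qed



definition RC :: "('j \<Rightarrow> complex) \<Rightarrow> ('j \<times> bool \<Rightarrow> real)" where
  "RC w = (\<lambda>(j, b). if b then Re (w j) else Im (w j))"

lemma RC_inj: "inj RC"
proof (rule injI)
  fix u v :: "'j \<Rightarrow> complex" assume h: "RC u = RC v"
  show "u = v"
  proof
    fix j
    have "Re (u j) = Re (v j)" using fun_cong[OF h, of "(j, True)"] by (simp add: RC_def)
    moreover have "Im (u j) = Im (v j)" using fun_cong[OF h, of "(j, False)"] by (simp add: RC_def)
    ultimately show "u j = v j" by (simp add: complex_eq_iff)
  qed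
qed

lemma complex_bound:
  fixes W :: "('j::finite \<Rightarrow> complex) set"
  assumes aff: "\<And>w w' t. w \<in> W \<Longrightarrow> w' \<in> W \<Longrightarrow> (\<lambda>j. w j + of_real t * (w' j - w j)) \<in> W"
  shows "\<exists>C. \<forall>w\<in>W. \<exists>w'\<in>W. \<forall>j. cmod (w' j) \<le> cmod (w j) \<and> cmod (w' j) \<le> C"
proof -
  have affR: "(\<lambda>i. y i + t * (y' i - y i)) \<in> RC ` W" if h: "y \<in> RC ` W" "y' \<in> RC ` W" for y y' t
  proof -
    obtain w w' where w: "w \<in> W" "w' \<in> W" "y = RC w" "y' = RC w'" using h by blast
    have "(\<lambda>i. y i + t * (y' i - y i)) = RC (\<lambda>j. w j + of_real t * (w' j - w j))"
      unfolding w RC_def by (auto simp: fun_eq_iff)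
    then show ?thesis using aff[OF w(1,2)] by blast
  qed
  obtain C where C: "\<forall>y\<in>RC ` W. \<exists>y'\<in>RC ` W. \<forall>i. \<bar>y' i\<bar> \<le> \<bar>y i\<bar> \<and> \<bar>y' i\<bar> \<le> C"
    using conformal_bound[of "RC ` W"] affR by blast
  show ?thesis
  proof (intro exI ballI)
    fix w assume "w \<in> W"
    then obtain w' where w': "w' \<in> W" "\<forall>i. \<bar>RC w' i\<bar> \<le> \<bar>RC w i\<bar> \<and> \<bar>RC w' i\<bar> \<le> C"
      using C by blast
    have "cmod (w' j) \<le> cmod (w j) \<and> cmod (w' j) \<le> 2 * C" for j
    proof -
      have r: "\<bar>Re (w' j)\<bar> \<le> \<bar>Re (w j)\<bar>" "\<bar>Re (w' j)\<bar> \<le> C"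
        using w'(2)[rule_format, of "(j, True)"] by (auto simp: RC_def)
      have i: "\<bar>Im (w' j)\<bar> \<le> \<bar>Im (w j)\<bar>" "\<bar>Im (w' j)\<bar> \<le> C"
        using w'(2)[rule_format, of "(j, False)"] by (auto simp: RC_def)
      have "(Re (w' j))\<^sup>2 + (Im (w' j))\<^sup>2 \<le> (Re (w j))\<^sup>2 + (Im (w j))\<^sup>2"
        using r(1) i(1) by (intro add_mono) (simp_all add: abs_le_square_iff)
      then have "cmod (w' j) \<le> cmod (w j)" unfolding cmod_def by (rule real_sqrt_le_mono)
      moreover have "cmod (w' j) \<le> 2 * C" using cmod_le[of "w' j"] r(2) i(2) by linarith
      ultimately show ?thesis by blast
    qed
    then show "\<exists>w'\<in>W. \<forall>j. cmod (w' j) \<le> cmod (w j) \<and> cmod (w' j) \<le> 2 * C" using w'(1) by blast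
  qed
qed



lemma dual_aux:
  fixes u :: "'j \<Rightarrow> nat \<Rightarrow> complex"
  assumes "finite G"
  shows "\<forall>t. (\<exists>c. \<forall>k<m. (\<Sum>j\<in>G. c j * u j k) = t k) \<or>
             (\<exists>a. (\<Sum>k<m. a k * t k) = 1 \<and> (\<forall>j\<in>G. (\<Sum>k<m. a k * u j k) = 0))"
  using assms
proof (induction G rule: finite_induct)
  case empty
  show ?case
  proof
    fix t :: "nat \<Rightarrow> complex"
    show "(\<exists>c. \<forall>k<m. (\<Sum>j\<in>{}. c j * u j k) = t k) \<or>
          (\<exists>a. (\<Sum>k<m. a k * t k) = 1 \<and> (\<forall>j\<in>{}. (\<Sum>k<m. a k * u j k) = 0))"
    proof (cases "\<forall>k<m. t k = 0")
      case True then show ?thesis by auto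
    next
      case False
      then obtain k0 where k0: "k0 < m" "t k0 \<noteq> 0" by blast
      define a where "a = (\<lambda>k. if k = k0 then 1 / t k0 else 0)"
      have "(\<Sum>k<m. a k * t k) = (\<Sum>k<m. if k = k0 then 1 else 0)"
        unfolding a_def using k0 by (intro sum.cong) auto
      also have "\<dots> = 1" using k0 by simp
      finally show ?thesis by blast
    qed
  qed
next
  case (insert g G)
  show ?case
  proof
    fix t :: "nat \<Rightarrow> complex"
    let ?S = "\<lambda>t. (\<exists>c. \<forall>k<m. (\<Sum>j\<in>insert g G. c j * u j k) = t k)"
    let ?D = "\<lambda>t. (\<exists>a. (\<Sum>k<m. a k * t k) = 1 \<and> (\<forall>j\<in>insert g G. (\<Sum>k<m. a k * u j k) = 0))"
    have sins: "(\<Sum>j\<in>insert g G. c j * u j k) = c g * u g k + (\<Sum>j\<in>G. c j * u j k)" for c k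
      using insert(1,2) by simp
    show "?S t \<or> ?D t"
    proof (cases "\<exists>c. \<forall>k<m. (\<Sum>j\<in>G. c j * u j k) = t k")
      case True
      then obtain c where c: "\<forall>k<m. (\<Sum>j\<in>G. c j * u j k) = t k" by blast
      have "(\<Sum>j\<in>G. (c(g := 0)) j * u j k) = (\<Sum>j\<in>G. c j * u j k)" for k
        using insert(2) by (intro sum.cong) auto
      then have "\<forall>k<m. (\<Sum>j\<in>insert g G. (c(g := 0)) j * u j k) = t k" using c sins by simp
      then show ?thesis by blast
    next
      case False
      then obtain a where a: "(\<Sum>k<m. a k * t k) = 1" "\<forall>j\<in>G. (\<Sum>k<m. a k * u j k) = 0"
        using insert(3) by blast
      define al where "al = (\<Sum>k<m. a k * u g k)"
      show ?thesis
      proof (cases "al = 0")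
        case True
        then have "?D t" using a al_def by auto
        then show ?thesis by blast
      next
        case an: False
        define t' where "t' = (\<lambda>k. t k - u g k / al)"
        show ?thesis
        proof (cases "\<exists>c. \<forall>k<m. (\<Sum>j\<in>G. c j * u j k) = t' k")
          case True
          then obtain c where c: "\<forall>k<m. (\<Sum>j\<in>G. c j * u j k) = t' k" by blast
          have "(\<Sum>j\<in>G. (c(g := 1 / al)) j * u j k) = (\<Sum>j\<in>G. c j * u j k)" for k
            using insert(2) by (intro sum.cong) auto
          then have "\<forall>k<m. (\<Sum>j\<in>insert g G. (c(g := 1 / al)) j * u j k) = t k"
            using c sins by (simp add: t'_def)
          then show ?thesis by blast
        next
          case False
          then obtain b where b: "(\<Sum>k<m. b k * t' k) = 1" "\<forall>j\<in>G. (\<Sum>k<m. b k * u j k) = 0"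
            using insert(3) by blast
          define be where "be = (\<Sum>k<m. b k * u g k)"
          define ch where "ch = (\<lambda>k. b k - be / al * a k)"
          have lin: "(\<Sum>k<m. ch k * v k) = (\<Sum>k<m. b k * v k) - be / al * (\<Sum>k<m. a k * v k)" for v
            unfolding ch_def by (simp add: algebra_simps sum_subtractf sum_distrib_left)
          have bt: "(\<Sum>k<m. b k * t k) = 1 + be / al"
          proof -
            have "(\<Sum>k<m. b k * t' k) = (\<Sum>k<m. b k * t k) - (\<Sum>k<m. b k * u g k) / al"
              unfolding t'_def by (simp add: algebra_simps sum_subtractf sum_divide_distrib)
            then show ?thesis using b(1) be_def by (simp add: algebra_simps)
          qed
          have "(\<Sum>k<m. ch k * t k) = 1" using lin[of t] bt a(1) by simp
          moreover have "\<forall>j\<in>insert g G. (\<Sum>k<m. ch k * u j k) = 0"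
          proof
            fix j assume "j \<in> insert g G"
            then show "(\<Sum>k<m. ch k * u j k) = 0"
            proof
              assume "j = g"
              then show ?thesis using lin[of "u g"] an unfolding al_def[symmetric] be_def[symmetric] by simp
            next
              assume "j \<in> G"
              then show ?thesis using lin[of "u j"] a(2) b(2) by simp
            qed
          qed
          ultimately show ?thesis by blast
        qed
      qed
    qed
  qed
qed



definition phi :: "('j::finite \<Rightarrow> real) \<Rightarrow> ('j \<Rightarrow> complex) \<Rightarrow> real" where
  "phi S w = (\<Sum>j\<in>UNIV. (S j * cmod (w j))\<^sup>2)"

definition inspanG :: "('i, 'j::finite) span_program \<Rightarrow> 'j set \<Rightarrow> bool" where
  "inspanG P G \<longleftrightarrow> (\<exists>c. \<forall>k < sp_dim P. (\<Sum>j\<in>G. c j * sp_vec P j k) = tvec k)"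

definition WposG :: "('i, 'j::finite) span_program \<Rightarrow> 'j set \<Rightarrow> ('j \<Rightarrow> complex) set" where
  "WposG P G = {w. \<forall>k < sp_dim P. (\<Sum>j\<in>UNIV. (if j \<in> G then w j else 0) * sp_vec P j k) = tvec k}"

definition WnegG :: "('i, 'j::finite) span_program \<Rightarrow> 'j set \<Rightarrow> ('j \<Rightarrow> complex) set" where
  "WnegG P G = Adag P ` {w'. (\<Sum>k<sp_dim P. cnj (tvec k) * w' k) = 1 \<and> (\<forall>j\<in>G. Adag P w' j = 0)}"

definition WG :: "('i, 'j::finite) span_program \<Rightarrow> 'j set \<Rightarrow> ('j \<Rightarrow> complex) set" where
  "WG P G = (if inspanG P G then WposG P G else WnegG P G)"

lemma wsize_WG: "wsize P S x = Inf (phi S ` WG P {j. grp_true P x j})"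
proof -
  have fp: "fP P x = inspanG P {j. grp_true P x j}" unfolding fP_def inspanG_def by simp
  have e1: "{(\<Sum>j\<in>UNIV. (S j * cmod (w j))\<^sup>2) | w. pos_witness P x w} = phi S ` WposG P {j. grp_true P x j}"
    unfolding phi_def WposG_def pos_witness_def by auto
  have e2: "{(\<Sum>j\<in>UNIV. (S j * cmod (Adag P w' j))\<^sup>2) | w'.
              (\<Sum>k<sp_dim P. cnj (tvec k) * w' k) = 1 \<and>
              (\<forall>j. grp_true P x j \<longrightarrow> Adag P w' j = 0)} = phi S ` WnegG P {j. grp_true P x j}"
    unfolding phi_def WnegG_def by auto
  show ?thesis unfolding wsize_def WG_def fp e1 e2 by simp
qed

lemma Adag_lin: "Adag P (\<lambda>k. w k + c * (w' k - w k)) j = Adag P w j + c * (Adag P w' j - Adag P w j)"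
  unfolding Adag_def by (simp add: algebra_simps sum.distrib sum_subtractf sum_distrib_left)

lemma WG_affine:
  assumes "w \<in> WG P G" "w' \<in> WG P G"
  shows "(\<lambda>j. w j + of_real t * (w' j - w j)) \<in> WG P G"
proof (cases "inspanG P G")
  case True
  then have w: "w \<in> WposG P G" "w' \<in> WposG P G" using assms by (auto simp: WG_def)
  have "\<forall>k < sp_dim P. (\<Sum>j\<in>UNIV. (if j \<in> G then w j + of_real t * (w' j - w j) else 0) * sp_vec P j k) = tvec k"
  proof (intro allI impI)
    fix k assume k: "k < sp_dim P"
    have "(\<Sum>j\<in>UNIV. (if j \<in> G then w j + of_real t * (w' j - w j) else 0) * sp_vec P j k)
      = (\<Sum>j\<in>UNIV. (if j \<in> G then w j else 0) * sp_vec P j k)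
        + of_real t * ((\<Sum>j\<in>UNIV. (if j \<in> G then w' j else 0) * sp_vec P j k)
                       - (\<Sum>j\<in>UNIV. (if j \<in> G then w j else 0) * sp_vec P j k))"
    proof -
      have "(\<Sum>j\<in>UNIV. (if j \<in> G then w j + of_real t * (w' j - w j) else 0) * sp_vec P j k)
        = (\<Sum>j\<in>UNIV. (if j \<in> G then w j else 0) * sp_vec P j k
            + of_real t * ((if j \<in> G then w' j else 0) * sp_vec P j k - (if j \<in> G then w j else 0) * sp_vec P j k))"
        by (intro sum.cong) (auto simp: algebra_simps)
      then show ?thesis by (simp add: sum.distrib sum_subtractf sum_distrib_left[symmetric])
    qed
    also have "\<dots> = tvec k" using w k by (simp add: WposG_def)
    finally show "(\<Sum>j\<in>UNIV. (if j \<in> G then w j + of_real t * (w' j - w j) else 0) * sp_vec P j k) = tvec k" .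
  qed
  then show ?thesis using True by (simp add: WG_def WposG_def)
next
  case False
  then have w: "w \<in> WnegG P G" "w' \<in> WnegG P G" using assms by (auto simp: WG_def)
  then obtain u u' where u: "w = Adag P u" "w' = Adag P u'"
    "(\<Sum>k<sp_dim P. cnj (tvec k) * u k) = 1" "\<forall>j\<in>G. Adag P u j = 0"
    "(\<Sum>k<sp_dim P. cnj (tvec k) * u' k) = 1" "\<forall>j\<in>G. Adag P u' j = 0"
    unfolding WnegG_def by blast
  define v where "v = (\<lambda>k. u k + of_real t * (u' k - u k))"
  have "(\<Sum>k<sp_dim P. cnj (tvec k) * v k) = (\<Sum>k<sp_dim P. cnj (tvec k) * u k)
     + of_real t * ((\<Sum>k<sp_dim P. cnj (tvec k) * u' k) - (\<Sum>k<sp_dim P. cnj (tvec k) * u k))"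
    unfolding v_def by (simp add: algebra_simps sum.distrib sum_subtractf sum_distrib_left)
  then have "(\<Sum>k<sp_dim P. cnj (tvec k) * v k) = 1" using u by simp
  moreover have "\<forall>j\<in>G. Adag P v j = 0" using u unfolding v_def Adag_lin by simp
  moreover have "(\<lambda>j. w j + of_real t * (w' j - w j)) = Adag P v"
    unfolding v_def u by (rule ext, rule Adag_lin[symmetric])
  ultimately show ?thesis using False by (auto simp: WG_def WnegG_def)
qed

lemma WG_nonempty:
  assumes "sp_wf P"
  shows "WG P G \<noteq> {}"
proof (cases "inspanG P G")
  case True
  then obtain c where c: "\<forall>k < sp_dim P. (\<Sum>j\<in>G. c j * sp_vec P j k) = tvec k"
    unfolding inspanG_def by blast
  have "(\<Sum>j\<in>UNIV. (if j \<in> G then c j else 0) * sp_vec P j k) = (\<Sum>j\<in>G. c j * sp_vec P j k)" for k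
  proof -
    have "(\<Sum>j\<in>UNIV. (if j \<in> G then c j else 0) * sp_vec P j k) = (\<Sum>j\<in>UNIV. if j \<in> G then c j * sp_vec P j k else 0)"
      by (intro sum.cong) auto
    also have "\<dots> = (\<Sum>j\<in>UNIV \<inter> G. c j * sp_vec P j k)" by (rule sum.inter_restrict[symmetric]) simp
    finally show ?thesis by simp
  qed
  then have "c \<in> WposG P G" using c by (simp add: WposG_def)
  then show ?thesis using True by (auto simp: WG_def)
next
  case False
  have fin: "finite G" by simp
  from dual_aux[OF fin, of "sp_dim P" "sp_vec P"] False
  obtain a where a: "(\<Sum>k<sp_dim P. a k * tvec k) = 1" "\<forall>j\<in>G. (\<Sum>k<sp_dim P. a k * sp_vec P j k) = 0"
    unfolding inspanG_def by blast
  define w' where "w' = (\<lambda>k. cnj (a k))"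
  have "(\<Sum>k<sp_dim P. cnj (tvec k) * w' k) = cnj (\<Sum>k<sp_dim P. a k * tvec k)"
    unfolding w'_def by (simp add: tvec_def mult.commute)
  then have 1: "(\<Sum>k<sp_dim P. cnj (tvec k) * w' k) = 1" using a(1) by simp
  have 2: "\<forall>j\<in>G. Adag P w' j = 0"
  proof
    fix j assume "j \<in> G"
    have "Adag P w' j = cnj (\<Sum>k<sp_dim P. a k * sp_vec P j k)"
      unfolding Adag_def w'_def by (simp add: mult.commute)
    then show "Adag P w' j = 0" using a(2) \<open>j \<in> G\<close> by simp
  qed
  have "Adag P w' \<in> WnegG P G" unfolding WnegG_def using 1 2 by blast
  then show ?thesis using False by (auto simp: WG_def)
qed



lemma GI:
  fixes f g :: "'a \<Rightarrow> real"
  assumes ne: "A \<noteq> {}" and f0: "\<And>a. a \<in> A \<Longrightarrow> 0 \<le> f a" and g0: "\<And>a. a \<in> A \<Longrightarrow> 0 \<le> g a"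
    and k: "0 \<le> k" and h: "\<And>a. a \<in> A \<Longrightarrow> \<exists>b\<in>A. f b \<le> k * g a + c"
  shows "Inf (f ` A) \<le> k * Inf (g ` A) + c"
proof -
  have bf: "bdd_below (f ` A)" using f0 by (auto intro!: bdd_belowI[of _ 0])
  have I: "Inf (f ` A) \<le> k * g a + c" if aA: "a \<in> A" for a
  proof -
    obtain b where "b \<in> A" "f b \<le> k * g a + c" using h[OF aA] by blast
    moreover have "Inf (f ` A) \<le> f b" using bf \<open>b \<in> A\<close> by (intro cInf_lower) auto
    ultimately show ?thesis by linarith
  qed
  show ?thesis
  proof (cases "k = 0")
    case True
    obtain a where "a \<in> A" using ne by blast
    then show ?thesis using I[of a] True by simp
  next
    case False
    then have kp: "0 < k" using k by simp
    have "(Inf (f ` A) - c) / k \<le> Inf (g ` A)"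
    proof (rule cInf_greatest)
      show "g ` A \<noteq> {}" using ne by simp
      fix y assume "y \<in> g ` A"
      then obtain a where "a \<in> A" "y = g a" by blast
      then show "(Inf (f ` A) - c) / k \<le> y" using I[of a] kp by (simp add: divide_le_eq mult.commute)
    qed
    then show ?thesis using kp by (simp add: divide_le_eq mult.commute)
  qed
qed

lemma WG_bound: "\<exists>C\<ge>0. \<forall>G. \<forall>w\<in>WG P G. \<exists>w'\<in>WG P G. \<forall>j. cmod (w' j) \<le> cmod (w j) \<and> cmod (w' j) \<le> C"
proof -
  have "\<forall>G. \<exists>C. \<forall>w\<in>WG P G. \<exists>w'\<in>WG P G. \<forall>j. cmod (w' j) \<le> cmod (w j) \<and> cmod (w' j) \<le> C"
  proof
    fix G show "\<exists>C. \<forall>w\<in>WG P G. \<exists>w'\<in>WG P G. \<forall>j. cmod (w' j) \<le> cmod (w j) \<and> cmod (w' j) \<le> C"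
      by (rule complex_bound) (rule WG_affine)
  qed
  from choice[OF this] obtain f where f: "\<forall>G. \<forall>w\<in>WG P G. \<exists>w'\<in>WG P G. \<forall>j. cmod (w' j) \<le> cmod (w j) \<and> cmod (w' j) \<le> f G"
    by blast
  define C where "C = (\<Sum>G\<in>UNIV. \<bar>f G\<bar>)"
  have fle: "f G \<le> C" for G
  proof -
    have "f G \<le> \<bar>f G\<bar>" by simp
    also have "\<dots> \<le> C" unfolding C_def by (rule member_le_sum) auto
    finally show ?thesis .
  qed
  have C0: "0 \<le> C" unfolding C_def by (simp add: sum_nonneg)
  show ?thesis
  proof (intro exI[of _ C] conjI allI ballI)
    show "0 \<le> C" by (rule C0)
    fix G w assume "w \<in> WG P G"
    then obtain w' where w': "w' \<in> WG P G" "\<forall>j. cmod (w' j) \<le> cmod (w j) \<and> cmod (w' j) \<le> f G"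
      using f by blast
    have "\<forall>j. cmod (w' j) \<le> cmod (w j) \<and> cmod (w' j) \<le> C"
    proof
      fix j show "cmod (w' j) \<le> cmod (w j) \<and> cmod (w' j) \<le> C" using w'(2) fle[of G] by (meson order_trans)
    qed
    then show "\<exists>w'\<in>WG P G. \<forall>j. cmod (w' j) \<le> cmod (w j) \<and> cmod (w' j) \<le> C" using w'(1) by blast
  qed
qed

lemma phi_nonneg: "0 \<le> phi S w" unfolding phi_def by (simp add: sum_nonneg)

lemma dnorm_ge: "\<bar>T j\<bar> \<le> dnorm T"
  unfolding dnorm_def by (rule Max_ge) auto

lemma dnorm_const: "dnorm (\<lambda>j::'j::finite. c) = \<bar>c\<bar>"
  unfolding dnorm_def by (simp add: image_constant_conv)

lemma part1:
  assumes "sp_wf P" "\<forall>j. 0 \<le> T j"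
  shows "wsize P (\<lambda>j. S j * sqrt (1 + T j)) x \<le> wsize P S x * (1 + dnorm T)"
proof -
  let ?A = "WG P {j. grp_true P x j}"
  have d0: "0 \<le> dnorm T" using dnorm_ge[of T] by (meson abs_ge_zero order_trans)
  have "Inf (phi (\<lambda>j. S j * sqrt (1 + T j)) ` ?A) \<le> (1 + dnorm T) * Inf (phi S ` ?A) + 0"
  proof (rule GI[OF WG_nonempty[OF assms(1)] phi_nonneg phi_nonneg])
    show "0 \<le> 1 + dnorm T" using d0 by simp
    fix w assume "w \<in> ?A"
    have "phi (\<lambda>j. S j * sqrt (1 + T j)) w \<le> (1 + dnorm T) * phi S w"
    proof -
      have "phi (\<lambda>j. S j * sqrt (1 + T j)) w = (\<Sum>j\<in>UNIV. (S j * cmod (w j))\<^sup>2 * (1 + T j))"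
        unfolding phi_def using assms(2)
        by (intro sum.cong) (auto simp: power_mult_distrib)
      also have "\<dots> \<le> (\<Sum>j\<in>UNIV. (S j * cmod (w j))\<^sup>2 * (1 + dnorm T))"
        using dnorm_ge[of T] by (intro sum_mono mult_left_mono) (auto simp: abs_le_iff)
      also have "\<dots> = (1 + dnorm T) * phi S w" unfolding phi_def
        by (simp add: sum_distrib_left mult.commute)
      finally show ?thesis .
    qed
    then show "\<exists>b\<in>?A. phi (\<lambda>j. S j * sqrt (1 + T j)) b \<le> (1 + dnorm T) * phi S w + 0"
      using \<open>w \<in> ?A\<close> by auto
  qed
  then show ?thesis unfolding wsize_WG by (simp add: mult.commute)
qed

lemma mono_w:
  assumes "sp_wf P" "\<forall>j. 0 \<le> S j \<and> S j \<le> S' j"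
  shows "wsize P S x \<le> wsize P S' x"
proof -
  let ?A = "WG P {j. grp_true P x j}"
  have "Inf (phi S ` ?A) \<le> 1 * Inf (phi S' ` ?A) + 0"
  proof (rule GI[OF WG_nonempty[OF assms(1)] phi_nonneg phi_nonneg])
    fix w assume "w \<in> ?A"
    have "phi S w \<le> phi S' w" unfolding phi_def using assms(2)
      by (intro sum_mono power_mono mult_right_mono) auto
    then show "\<exists>b\<in>?A. phi S b \<le> 1 * phi S' w + 0" using \<open>w \<in> ?A\<close> by auto
  qed simp
  then show ?thesis unfolding wsize_WG by simp
qed

lemma part2:
  fixes P :: "('i, 'j::finite) span_program"
  assumes "sp_wf P"
  shows "\<exists>C\<ge>0. \<forall>x S T. (\<forall>j. 0 \<le> S j) \<longrightarrow>
     wsize P (\<lambda>j. sqrt ((S j)\<^sup>2 + (T j)\<^sup>2)) x \<le> wsize P S x + C * (dnorm T)\<^sup>2"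
proof -
  obtain Cb where Cb: "Cb \<ge> 0" "\<forall>G. \<forall>w\<in>WG P G. \<exists>w'\<in>WG P G. \<forall>j. cmod (w' j) \<le> cmod (w j) \<and> cmod (w' j) \<le> Cb"
    using WG_bound by blast
  define C where "C = real CARD('j) * Cb\<^sup>2"
  have "\<forall>x S T. (\<forall>j. 0 \<le> S j) \<longrightarrow>
     wsize P (\<lambda>j. sqrt ((S j)\<^sup>2 + (T j)\<^sup>2)) x \<le> wsize P S x + C * (dnorm T)\<^sup>2"
  proof (intro allI impI)
    fix x and S T :: "'j \<Rightarrow> real" assume S0: "\<forall>j. 0 \<le> S j"
    let ?A = "WG P {j. grp_true P x j}"
    have "Inf (phi (\<lambda>j. sqrt ((S j)\<^sup>2 + (T j)\<^sup>2)) ` ?A) \<le> 1 * Inf (phi S ` ?A) + C * (dnorm T)\<^sup>2"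
    proof (rule GI[OF WG_nonempty[OF assms(1)] phi_nonneg phi_nonneg])
      fix w assume "w \<in> ?A"
      then obtain w' where w': "w' \<in> ?A" "\<forall>j. cmod (w' j) \<le> cmod (w j) \<and> cmod (w' j) \<le> Cb"
        using Cb(2) by blast
      have "phi (\<lambda>j. sqrt ((S j)\<^sup>2 + (T j)\<^sup>2)) w' = (\<Sum>j\<in>UNIV. (S j * cmod (w' j))\<^sup>2 + (T j)\<^sup>2 * (cmod (w' j))\<^sup>2)"
        unfolding phi_def by (intro sum.cong) (auto simp: power_mult_distrib algebra_simps)
      also have "\<dots> \<le> (\<Sum>j\<in>UNIV. (S j * cmod (w j))\<^sup>2 + (dnorm T)\<^sup>2 * Cb\<^sup>2)"
      proof (intro sum_mono add_mono)
        fix j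
        show "(S j * cmod (w' j))\<^sup>2 \<le> (S j * cmod (w j))\<^sup>2"
          using w'(2) S0 by (intro power_mono mult_left_mono) auto
        have "(T j)\<^sup>2 \<le> (dnorm T)\<^sup>2"
          using dnorm_ge[of T j] by (metis abs_ge_zero power2_abs power_mono)
        moreover have "(cmod (w' j))\<^sup>2 \<le> Cb\<^sup>2" using w'(2) by (intro power_mono) auto
        ultimately show "(T j)\<^sup>2 * (cmod (w' j))\<^sup>2 \<le> (dnorm T)\<^sup>2 * Cb\<^sup>2"
          by (intro mult_mono) auto
      qed
      also have "\<dots> = 1 * phi S w + C * (dnorm T)\<^sup>2"
        unfolding phi_def C_def by (simp add: sum.distrib algebra_simps)
      finally show "\<exists>b\<in>?A. phi (\<lambda>j. sqrt ((S j)\<^sup>2 + (T j)\<^sup>2)) b \<le> 1 * phi S w + C * (dnorm T)\<^sup>2"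
        using w'(1) by blast
    qed (auto simp: C_def)
    then show "wsize P (\<lambda>j. sqrt ((S j)\<^sup>2 + (T j)\<^sup>2)) x \<le> wsize P S x + C * (dnorm T)\<^sup>2"
      unfolding wsize_WG by simp
  qed
  moreover have "C \<ge> 0" unfolding C_def by simp
  ultimately show ?thesis by blast
qed



lemma Utilde_pos:
  assumes "compl_pos P U"
  shows "0 < Utilde P U x j"
proof (cases "grp_true P x j")
  case True then show ?thesis by (simp add: Utilde_def)
next
  case False
  then obtain l where l: "l \<in> set (sp_lits P j)" "\<not> lit_true x l" unfolding grp_true_def by blast
  then obtain i where i: "i < length (sp_lits P j)" "sp_lits P j ! i = l" by (metis in_set_conv_nth)
  let ?F = "{i. i < length (sp_lits P j) \<and> \<not> lit_true x (sp_lits P j ! i)}"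
  have fin: "finite ?F" by (rule finite_subset[of _ "{..<length (sp_lits P j)}"]) auto
  have "i \<in> ?F" using i l by simp
  then have "0 < (\<Sum>i\<in>?F. inverse (U j i))"
    using fin assms unfolding compl_pos_def by (intro sum_pos) auto
  then show ?thesis using False by (simp add: Utilde_def)
qed

lemma maxU_nonneg:
  fixes P :: "('i, 'j::finite) span_program"
  shows "0 \<le> maxU P U"
proof -
  have "{U j i | j i. i < length (sp_lits P j)} \<subseteq> (\<Union>j. U j ` {..<length (sp_lits P j)})" by auto
  then have fin: "finite {U j i | j i. i < length (sp_lits P j)}"
    by (rule finite_subset) simp
  then show ?thesis unfolding maxU_def by (intro Max_ge) auto
qed

theorem lemmaA6:
  fixes P :: "('i, 'j::finite) span_program"
  assumes "sp_wf P"
  shows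
    "(\<forall>x S T. posdiag S \<and> posdiag T \<longrightarrow>
        wsize P (\<lambda>j. S j * sqrt (1 + T j)) x \<le> wsize P S x * (1 + dnorm T))
   \<and> (\<exists>C. \<forall>x S T. posdiag S \<and> posdiag T \<longrightarrow>
        wsize P (\<lambda>j. sqrt ((S j)\<^sup>2 + (T j)\<^sup>2)) x \<le> wsize P S x + C * (dnorm T)\<^sup>2)
   \<and> (\<forall>c1 c2 :: real. \<exists>c1' c2' :: real. \<forall>(lam::real) U x U'.
        compl_pos P U \<and> (\<forall>j. 0 < U' j) \<and>
        (\<forall>j. U' j \<le> c1 + Utilde P U x j * (1 + c2 * \<bar>lam\<bar> * maxU P U)) \<longrightarrow>
        wsize P (\<lambda>j. sqrt (U' j)) x \<le> c1' + wsize_U P U x * (1 + c2' * \<bar>lam\<bar> * maxU P U))"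
proof (intro conjI)
  show "\<forall>x S T. posdiag S \<and> posdiag T \<longrightarrow>
        wsize P (\<lambda>j. S j * sqrt (1 + T j)) x \<le> wsize P S x * (1 + dnorm T)"
    using part1[OF assms] unfolding posdiag_def by (simp add: less_imp_le)
  obtain C where C: "C \<ge> 0" "\<forall>x S T. (\<forall>j. 0 \<le> S j) \<longrightarrow>
     wsize P (\<lambda>j. sqrt ((S j)\<^sup>2 + (T j)\<^sup>2)) x \<le> wsize P S x + C * (dnorm T)\<^sup>2"
    using part2[OF assms] by blast
  show "\<exists>C. \<forall>x S T. posdiag S \<and> posdiag T \<longrightarrow>
        wsize P (\<lambda>j. sqrt ((S j)\<^sup>2 + (T j)\<^sup>2)) x \<le> wsize P S x + C * (dnorm T)\<^sup>2"
    using C(2) unfolding posdiag_def by (meson less_imp_le)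
  show "\<forall>c1 c2 :: real. \<exists>c1' c2' :: real. \<forall>(lam::real) U x U'.
        compl_pos P U \<and> (\<forall>j. 0 < U' j) \<and>
        (\<forall>j. U' j \<le> c1 + Utilde P U x j * (1 + c2 * \<bar>lam\<bar> * maxU P U)) \<longrightarrow>
        wsize P (\<lambda>j. sqrt (U' j)) x \<le> c1' + wsize_U P U x * (1 + c2' * \<bar>lam\<bar> * maxU P U)"
  proof (intro allI)
    fix c1 c2 :: real
    show "\<exists>c1' c2' :: real. \<forall>(lam::real) U x U'.
        compl_pos P U \<and> (\<forall>j. 0 < U' j) \<and>
        (\<forall>j. U' j \<le> c1 + Utilde P U x j * (1 + c2 * \<bar>lam\<bar> * maxU P U)) \<longrightarrow>
        wsize P (\<lambda>j. sqrt (U' j)) x \<le> c1' + wsize_U P U x * (1 + c2' * \<bar>lam\<bar> * maxU P U)"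
    proof (intro exI allI impI)
      fix lam :: real and U x and U' :: "'j \<Rightarrow> real"
      assume H: "compl_pos P U \<and> (\<forall>j. 0 < U' j) \<and>
        (\<forall>j. U' j \<le> c1 + Utilde P U x j * (1 + c2 * \<bar>lam\<bar> * maxU P U))"
      define Ut where "Ut = Utilde P U x"
      define M where "M = maxU P U"
      define K where "K = max c2 0 * \<bar>lam\<bar> * M"
      have M0: "0 \<le> M" unfolding M_def by (rule maxU_nonneg)
      have K0: "0 \<le> K" unfolding K_def using M0 by simp
      have Ut0: "\<And>j. 0 < Ut j" unfolding Ut_def using H by (intro Utilde_pos) blast
      define S1 where "S1 = (\<lambda>j. sqrt (Ut j) * sqrt (1 + K))"
      define T1 where "T1 = (\<lambda>j::'j. sqrt (max c1 0 + 1))"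
      have S1sq: "(S1 j)\<^sup>2 = Ut j * (1 + K)" for j
        unfolding S1_def using Ut0[of j] K0 by (simp add: power_mult_distrib)
      have T1sq: "(T1 j)\<^sup>2 = max c1 0 + 1" for j unfolding T1_def by simp
      have "wsize P (\<lambda>j. sqrt (U' j)) x \<le> wsize P (\<lambda>j. sqrt ((S1 j)\<^sup>2 + (T1 j)\<^sup>2)) x"
      proof (rule mono_w[OF assms], intro allI conjI)
        fix j
        show "0 \<le> sqrt (U' j)" using H by (simp add: less_imp_le)
        have "c2 * \<bar>lam\<bar> * M \<le> K" unfolding K_def using M0
          by (intro mult_right_mono) auto
        then have "Ut j * (c2 * \<bar>lam\<bar> * M) \<le> Ut j * K" using Ut0[of j] by (intro mult_left_mono) auto
        then have "U' j \<le> Ut j * (1 + K) + (max c1 0 + 1)"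
          using H unfolding Ut_def M_def by (smt (verit) distrib_left mult.right_neutral)
        then show "sqrt (U' j) \<le> sqrt ((S1 j)\<^sup>2 + (T1 j)\<^sup>2)" unfolding S1sq T1sq by simp
      qed
      also have "\<dots> \<le> wsize P S1 x + C * (dnorm T1)\<^sup>2"
      proof -
        have "\<forall>j. 0 \<le> S1 j" unfolding S1_def using Ut0 K0 by (simp add: less_imp_le)
        then show ?thesis using C(2) by blast
      qed
      also have "(dnorm T1)\<^sup>2 = max c1 0 + 1" unfolding T1_def dnorm_const by simp
      also have "wsize P S1 x \<le> wsize P (\<lambda>j. sqrt (Ut j)) x * (1 + dnorm (\<lambda>j::'j. K))"
        unfolding S1_def using part1[OF assms, of "\<lambda>j. K"] K0 by simp
      also have "dnorm (\<lambda>j::'j. K) = K" using K0 by (simp add: dnorm_const)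
      finally show "wsize P (\<lambda>j. sqrt (U' j)) x \<le> C * (max c1 0 + 1) + wsize_U P U x * (1 + max c2 0 * \<bar>lam\<bar> * maxU P U)"
        unfolding wsize_U_def Ut_def K_def M_def by simp
    qed
  qed
qed


end
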